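(* Let $p,q$ be integers with $2\le q<p$ and $q\mid p$, and let $s=\frac{\log q}{\log p}$. For every regular mapping $\tau:\Sigma_q^\ast\to\{-1,0,\ldots,p-2\}$, the associated set $\Lambda(\tau)$ (a regular maximal orthogonal set of $\mu_{p,q}$) satisfies \[ D_s^+(\Lambda(\tau))\le \frac{1}{\left(\frac{q-1}{2(p-1)}\right)^{s}}=\left(\frac{2(p-1)}{q-1}\right)^{s}. \] Moreover, the bound is attained by the canonical set \[ \Lambda_{p,q}=\Big\{\sum_{i=1}^{k}a_i p^{i-1}: a_i\in\{0,1,\ldots,q-1\},\ k\ge 1\Big\}, \] i.e. $D_s^+(\Lambda_{p,q})=\left(\frac{2(p-1)}{q-1}\right)^{s}$.
   Context: $\mu_{p,q}$ denotes the self-similar probability measure on $\mathbb R$ satisfying $\mu=\frac1q\sum_{d\in\mathcal D}\mu\circ f_d^{-1}$ with $f_d(x)=p^{-1}(x+d)$ and $\mathcal D=\frac pq\{0,1,\ldots,q-1\}$. Upper $r$-Beurling density: for a countable $\Lambda\subseteq\mathbb R$ and $r>0$, $D_r^+(\Lambda)=\limsup_{h\to\infty}\sup_{x\in\mathbb R}\frac{\#(\Lambda\cap B(x,h))}{h^r}$, where $B(x,h)=(x-h,x+h)$. Let $\Sigma_q=\{0,1,\ldots,q-1\}$, $\Sigma_q^n$ the words of length $n$, and $\Sigma_q^\ast=\bigcup_{n\ge1}\Sigma_q^n$. A map $\tau:\Sigma_q^\ast\to\{-1,0,\ldots,p-2\}$ is a regular mapping if (i) $\tau(0^n)=0$ for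 all $n\ge1$; (ii) $\tau(i_1\cdots i_n)\in i_n+q\mathbb Z$ for every word $i_1\cdots i_n$; (iii) for every $I\in\Sigma_q^\ast$, $\tau(I0^l)=0$ for all sufficiently large $l$. For $I=i_1\cdots i_n\in\Sigma_q^\ast$ and $k\ge1$, let $I_{1,k}=i_1\cdots i_k$ if $k\le n$ and $I_{1,k}=i_1\cdots i_n0^{k-n}$ if $k>n$, and set $\tau^\ast(I)=\sum_{k=1}^\infty \tau(I_{1,k})p^{k-1}$ (a finite sum by (iii)). Then $\Lambda(\tau)=\{\tau^\ast(I): I\in\Sigma_q^\ast\}\subseteq\mathbb Z$. (Equivalently, writing each $n\ge1$ in base $q$ as $n=i_1+i_2q+\cdots+i_Nq^{N-1}$ with $i_N\ne0$ and $I=i_1\cdots i_N$, $\lambda_n=\tau^\ast(I)$, $\lambda_0=0$, and $\Lambda(\tau)=\{\lambda_n\}_{n\ge0}$.) The canonical set $\Lambda_{p,q}$ equals $\Lambda(\tau)$ for $\tau(i_1\cdots i_n)=i_n$. *)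

theory Defs
  imports "HOL-Analysis.Analysis" "HOL-Library.Liminf_Limsup"
begin

definition upper_beurling_density :: "real \<Rightarrow> real set \<Rightarrow> ereal" where
  "upper_beurling_density r \<Lambda> =
     Limsup at_top (\<lambda>h::real. SUP x::real.
        ereal (real (card (\<Lambda> \<inter> {x - h <..< x + h})) / h powr r))"

definition words :: "nat \<Rightarrow> nat list set" where
  "words q = {I. I \<noteq> [] \<and> set I \<subseteq> {..<q}}"

definition regular_mapping :: "nat \<Rightarrow> nat \<Rightarrow> (nat list \<Rightarrow> int) \<Rightarrow> bool" where
  "regular_mapping p q \<tau> \<longleftrightarrow>
     (\<forall>I\<in>words q. \<tau> I \<in> {-1 .. int p - 2}) \<and>
     (\<forall>n\<ge>1. \<tau> (replicate n 0) = 0) \<and>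
     (\<forall>I\<in>words q. \<tau> I mod int q = int (last I) mod int q) \<and>
     (\<forall>I\<in>words q. \<exists>L. \<forall>l\<ge>L. \<tau> (I @ replicate l 0) = 0)"

definition pref :: "nat list \<Rightarrow> nat \<Rightarrow> nat list" where
  "pref I k = take k (I @ replicate k 0)"

text \<open>tau*(I) = sum_{k>=1} tau(I_{1,k}) p^(k-1); only finitely many nonzero terms
  for a regular mapping.\<close>
definition tau_star :: "nat \<Rightarrow> (nat list \<Rightarrow> int) \<Rightarrow> nat list \<Rightarrow> int" where
  "tau_star p \<tau> I = (\<Sum>k \<in> {k. k \<ge> 1 \<and> \<tau> (pref I k) \<noteq> 0}. \<tau> (pref I k) * int p ^ (k - 1))"

definition Lambda_tau :: "nat \<Rightarrow> nat \<Rightarrow> (nat list \<Rightarrow> int) \<Rightarrow> int set" where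
  "Lambda_tau p q \<tau> = tau_star p \<tau> ` words q"

definition canonical_set :: "nat \<Rightarrow> nat \<Rightarrow> int set" where
  "canonical_set p q = {(\<Sum>i<k. int (a i) * int p ^ i) | a k. k \<ge> 1 \<and> (\<forall>i<k. a i < q)}"

end

theory Submission
  imports Defs
begin

definition gen :: "nat \<Rightarrow> (nat list \<Rightarrow> int) \<Rightarrow> bool" where
 "gen q \<tau> \<longleftrightarrow> (\<forall>I\<in>words q. \<tau> I mod int q = int (last I) mod int q) \<and>
     (\<forall>I\<in>words q. \<exists>L. \<forall>l\<ge>L. \<tau> (I @ replicate l 0) = 0)"

lemma pref_alt: "pref I k = take k I @ replicate (k - length I) 0"
  unfolding pref_def by (simp add: take_append min_def)

lemma pref_Cons_Suc: "pref (j # I) (Suc k) = j # pref (if I = [] then [0] else I) k"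
  unfolding pref_alt by (cases k) auto

lemma pref_in_words: "I \<in> words q \<Longrightarrow> k \<ge> 1 \<Longrightarrow> 0 < q \<Longrightarrow> pref I k \<in> words q"
  unfolding words_def pref_alt using set_take_subset[of k I]
  by (cases I; cases k) (auto)

lemma tau_star_sum:
  assumes "gen q \<tau>" "I \<in> words q"
  shows "\<exists>K0. \<forall>K\<ge>K0. tau_star p \<tau> I = (\<Sum>k<K. \<tau> (pref I (Suc k)) * int p ^ k)"
proof -
  obtain L where L: "\<forall>l\<ge>L. \<tau> (I @ replicate l 0) = 0"
    using assms unfolding gen_def by blast
  have z: "\<tau> (pref I k) = 0" if "k > length I + L" for k
  proof -
    have "pref I k = I @ replicate (k - length I) 0" using that unfolding pref_alt by simp
    then show ?thesis using L that by simp
  qed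
  have "tau_star p \<tau> I = (\<Sum>k<K. \<tau> (pref I (Suc k)) * int p ^ k)" if K: "K \<ge> length I + L" for K
  proof -
    have sub: "{k. k \<ge> 1 \<and> \<tau> (pref I k) \<noteq> 0} \<subseteq> {1..K}"
      using z K by (auto simp: not_less[symmetric])
    have "tau_star p \<tau> I = (\<Sum>k\<in>{1..K}. \<tau> (pref I k) * int p ^ (k - 1))"
      unfolding tau_star_def by (rule sum.mono_neutral_left) (use sub in auto)
    also have "\<dots> = (\<Sum>k\<in>Suc ` {..<K}. \<tau> (pref I k) * int p ^ (k - 1))"
      by (simp add: image_Suc_lessThan)
    also have "\<dots> = (\<Sum>k<K. \<tau> (pref I (Suc k)) * int p ^ k)"
      by (subst sum.reindex) auto
    finally show ?thesis .
  qed
  then show ?thesis by blast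
qed

lemma gen_sub:
  assumes "gen q \<tau>" "j < q"
  shows "gen q (\<lambda>J. \<tau> (j # J))"
proof -
  have w: "j # J \<in> words q" if "J \<in> words q" for J using that assms(2) unfolding words_def by auto
  show ?thesis unfolding gen_def
  proof (intro conjI ballI)
    fix J assume J: "J \<in> words q"
    then have "J \<noteq> []" unfolding words_def by auto
    then show "\<tau> (j # J) mod int q = int (last J) mod int q"
      using assms(1) w[OF J] unfolding gen_def by auto
    have "\<exists>L. \<forall>l\<ge>L. \<tau> ((j # J) @ replicate l 0) = 0"
      using assms(1) w[OF J] unfolding gen_def by blast
    then show "\<exists>L. \<forall>l\<ge>L. \<tau> (j # J @ replicate l 0) = 0" by simp
  qed
qed

lemma decomp:
  assumes g: "gen q \<tau>" and j: "j < q" and I: "j # I \<in> words q" and q: "0 < q"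
  defines "I' \<equiv> (if I = [] then [0] else I)"
  shows "I' \<in> words q" "tau_star p \<tau> (j # I) = \<tau> [j] + int p * tau_star p (\<lambda>J. \<tau> (j # J)) I'"
proof -
  show I'w: "I' \<in> words q" using I q unfolding I'_def words_def by auto
  obtain K1 where K1: "\<forall>K\<ge>K1. tau_star p \<tau> (j # I) = (\<Sum>k<K. \<tau> (pref (j#I) (Suc k)) * int p ^ k)"
    using tau_star_sum[OF g I] by blast
  obtain K2 where K2: "\<forall>K\<ge>K2. tau_star p (\<lambda>J. \<tau> (j # J)) I' = (\<Sum>k<K. \<tau> (j # pref I' (Suc k)) * int p ^ k)"
    using tau_star_sum[OF gen_sub[OF g j] I'w] by blast
  define K where "K = K1 + K2"
  have "tau_star p \<tau> (j # I) = (\<Sum>k<Suc K. \<tau> (pref (j#I) (Suc k)) * int p ^ k)"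
    by (rule K1[rule_format]) (simp add: K_def)
  also have "\<dots> = \<tau> (pref (j#I) 1) + (\<Sum>k<K. \<tau> (pref (j#I) (Suc (Suc k))) * int p ^ Suc k)"
    by (subst sum.lessThan_Suc_shift) simp
  also have "\<dots> = \<tau> [j] + int p * (\<Sum>k<K. \<tau> (j # pref I' (Suc k)) * int p ^ k)"
    by (simp only: pref_Cons_Suc I'_def[symmetric] sum_distrib_left)
       (simp add: pref_def mult_ac)
  also have "\<dots> = \<tau> [j] + int p * tau_star p (\<lambda>J. \<tau> (j # J)) I'"
    using K2[rule_format, of K] K_def by simp
  finally show "tau_star p \<tau> (j # I) = \<tau> [j] + int p * tau_star p (\<lambda>J. \<tau> (j # J)) I'" .
qed

lemma class_decomp:
  assumes g: "gen q \<tau>" and x: "x \<in> tau_star p \<tau> ` words q"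
  shows "\<exists>j<q. \<exists>y \<in> tau_star p (\<lambda>J. \<tau> (j # J)) ` words q. x = \<tau> [j] + int p * y"
proof -
  obtain I where I: "I \<in> words q" "x = tau_star p \<tau> I" using x by blast
  then obtain j I0 where jI: "I = j # I0" unfolding words_def by (cases I) auto
  have j: "j < q" using I jI unfolding words_def by auto
  then have q: "0 < q" by simp
  show ?thesis using decomp[OF g j I(1)[unfolded jI] q] I jI j by blast
qed

lemma tau_single_mod:
  assumes g: "gen q \<tau>" and j: "j < q"
  shows "\<tau> [j] mod int q = int j"
proof -
  have "[j] \<in> words q" using j unfolding words_def by auto
  then have "\<tau> [j] mod int q = int j mod int q" using g unfolding gen_def by auto
  then show ?thesis using j by simp
qed

lemma class_mod:
  assumes g: "gen q \<tau>" and j: "j < q" and d: "q dvd p"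
  shows "(\<tau> [j] + int p * y) mod int q = int j"
proof -
  obtain m where "p = q * m" using d by blast
  then have "(\<tau> [j] + int p * y) mod int q = \<tau> [j] mod int q" by (simp add: mult.assoc)
  then show ?thesis using tau_single_mod[OF g j] by simp
qed

lemma jensen_pow:
  fixes u :: "'a \<Rightarrow> real"
  assumes A: "finite A" "A \<noteq> {}" and u: "\<And>j. j \<in> A \<Longrightarrow> u j > 0" and s: "0 \<le> s" "s \<le> 1"
  shows "(\<Sum>j\<in>A. u j powr s) \<le> card A * ((\<Sum>j\<in>A. u j) / card A) powr s"
proof -
  define v where "v = (\<Sum>j\<in>A. u j) / card A"
  have cA: "card A > 0" using A by (simp add: card_gt_0_iff)
  have "(\<Sum>j\<in>A. u j) > 0" using A u by (intro sum_pos) auto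
  then have v: "v > 0" using cA by (simp add: v_def)
  have one: "u j powr s \<le> (s * u j + (1 - s) * v) / v powr (1 - s)" if "j \<in> A" for j
  proof -
    have "u j powr s * v powr (1 - s) \<le> s * u j + (1 - s) * v"
      by (rule Youngs_inequality_0) (use s u that v in auto)
    then show ?thesis using v by (simp add: pos_le_divide_eq)
  qed
  have "(\<Sum>j\<in>A. u j powr s) \<le> (\<Sum>j\<in>A. (s * u j + (1 - s) * v) / v powr (1 - s))"
    by (rule sum_mono) (rule one)
  also have "\<dots> = (s * (\<Sum>j\<in>A. u j) + (1 - s) * v * card A) / v powr (1 - s)"
    by (simp add: sum_divide_distrib[symmetric] sum.distrib sum_distrib_left)
  also have "\<dots> = card A * v / v powr (1 - s)"
    using cA by (simp add: v_def field_simps)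
  also have "\<dots> = card A * v powr s"
  proof -
    have "v powr s * v powr (1 - s) = v" using v by (simp add: powr_add[symmetric])
    then show ?thesis using v by (simp add: field_simps)
  qed
  finally show ?thesis by (simp add: v_def)
qed

lemma chord:
  fixes p q k :: nat
  assumes q: "2 \<le> q" "q < p" and k: "1 \<le> k" "k \<le> q"
  shows "real k powr (ln p / ln q) \<le> 1 + (real k - 1) * (real p - 1) / (real q - 1)"
proof -
  define a where "a = ln (real p) / ln (real q)"
  have lq: "ln (real q) > 0" using q by simp
  have "ln (real q) < ln (real p)" using q by simp
  then have a1: "a \<ge> 1" using lq by (simp add: a_def)
  have cv: "convex_on {1..real q} (\<lambda>x. x powr a)"
    by (rule convex_on_subset[OF powr_convex[OF a1]]) auto
  have qa: "real q powr a = real p"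
    using lq q by (simp add: a_def powr_def)
  have "real k powr a \<le> (real q powr a - 1 powr a) / (real q - 1) * (real k - 1) + 1 powr a"
    using convex_onD_Icc'[OF cv, of "real k"] k by simp
  then show ?thesis using qa by (simp add: a_def mult_ac)
qed

lemma key_ineq:
  fixes p q k :: nat and L :: real
  assumes q: "2 \<le> q" "q < p" and k: "1 \<le> k" "k \<le> q" and L: "L \<ge> real k - 1"
  defines "s \<equiv> ln (real q) / ln (real p)" and "c \<equiv> (real q - 1) / (real p - 1)"
  shows "real k * ((L - (real k - 1)) / real p / c + 1) powr s \<le> (L / c + 1) powr s"
proof -
  have lq: "ln (real q) > 0" using q by simp
  have lp: "ln (real p) > 0" using q by simp
  have s0: "s > 0" using lq lp by (simp add: s_def)
  have c0: "c > 0" using q by (simp add: c_def)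
  define K where "K = real k powr (ln p / ln q)"
  have Kk: "K powr s = real k"
    using lq lp k by (simp add: K_def powr_powr s_def)
  have K0: "K \<ge> 0" by (simp add: K_def)
  have Kc: "K \<le> 1 + (real k - 1) / c"
    using chord[OF q k] by (simp add: K_def c_def)
  have "K \<le> real q powr (ln p / ln q)" unfolding K_def
    using k by (intro powr_mono2) (use lq lp in auto)
  also have "\<dots> = real p" using lq q by (simp add: powr_def)
  finally have Kp: "K \<le> real p" .
  have X: "(L - (real k - 1)) / c \<ge> 0" using L c0 by simp
  have "K * ((L - (real k - 1)) / real p / c + 1) = (K / real p) * ((L - (real k - 1)) / c) + K"
    by (simp add: field_simps)
  also have "\<dots> \<le> 1 * ((L - (real k - 1)) / c) + (1 + (real k - 1) / c)"
    apply (intro add_mono mult_right_mono Kc X)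
    using Kp q by (simp add: divide_le_eq)
  also have "\<dots> = L / c + 1" using c0 by (simp add: field_simps)
  finally have main: "K * ((L - (real k - 1)) / real p / c + 1) \<le> L / c + 1" .
  have nn: "(L - (real k - 1)) / real p / c + 1 \<ge> 0" using L c0 q by simp
  have "real k * ((L - (real k - 1)) / real p / c + 1) powr s = (K * ((L - (real k - 1)) / real p / c + 1)) powr s"
    using K0 nn by (simp add: powr_mult Kk)
  also have "\<dots> \<le> (L / c + 1) powr s"
    by (rule powr_mono2) (use s0 K0 nn main in auto)
  finally show ?thesis .
qed

lemma rank_sum:
  fixes f :: "'a \<Rightarrow> int"
  assumes A: "finite A" and inj: "inj_on f A"
  shows "(\<Sum>j\<in>A. card {i\<in>A. f i < f j}) = (\<Sum>i<card A. i)"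
proof -
  define r where "r j = card {i\<in>A. f i < f j}" for j
  have mono: "r i < r j" if "i \<in> A" "j \<in> A" "f i < f j" for i j
  proof -
    have "{x\<in>A. f x < f i} \<subset> {x\<in>A. f x < f j}" using that by auto
    then show ?thesis unfolding r_def by (intro psubset_card_mono) (use A in auto)
  qed
  have injr: "inj_on r A"
  proof (rule inj_onI)
    fix i j assume ij: "i \<in> A" "j \<in> A" "r i = r j"
    show "i = j"
    proof (rule ccontr)
      assume "i \<noteq> j"
      then have "f i \<noteq> f j" using inj ij by (auto dest: inj_onD)
      then show False using mono[of i j] mono[of j i] ij by (cases "f i < f j") auto
    qed
  qed
  have lt: "r j < card A" if "j \<in> A" for j
  proof -
    have "{i\<in>A. f i < f j} \<subset> A" using that by auto
    then show ?thesis unfolding r_def by (intro psubset_card_mono) (use A in auto)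
  qed
  have im: "r ` A = {..<card A}"
  proof (rule card_subset_eq)
    show "r ` A \<subseteq> {..<card A}" using lt by auto
    show "card (r ` A) = card {..<card A}" using card_image[OF injr] by simp
  qed simp
  have "(\<Sum>j\<in>A. r j) = (\<Sum>i\<in>r ` A. i)" by (simp add: sum.reindex[OF injr])
  then show ?thesis using im unfolding r_def by simp
qed

lemma sum_lessThan_id: "real (\<Sum>i<k. i) = real k * (real k - 1) / 2"
proof (induction k)
  case (Suc k) then show ?case by (simp add: field_simps)
qed simp

lemma card_int_interval:
  fixes X :: "int set"
  assumes "X \<subseteq> {a..<b}" "a \<le> b"
  shows "int (card X) \<le> b - a"
proof -
  have "card X \<le> card {a..<b}" by (rule card_mono) (use assms in auto)
  then have "int (card X) \<le> int (nat (b - a))" by (simp only: card_atLeastLessThan_int of_nat_le_iff)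
  then show ?thesis using assms(2) by simp
qed

lemma main_count:
  fixes p q :: nat
  assumes q: "2 \<le> q" "q < p" "q dvd p"
  defines "s \<equiv> ln (real q) / ln (real p)" and "c \<equiv> (real q - 1) / (real p - 1)"
  shows "gen q \<tau> \<Longrightarrow> finite S \<Longrightarrow> S \<noteq> {} \<Longrightarrow> S \<subseteq> tau_star p \<tau> ` words q \<Longrightarrow>
    real (card S) \<le> (real_of_int (Max S - Min S) / c + 1) powr s"
proof (induction "nat (Max S - Min S)" arbitrary: \<tau> S rule: less_induct)
  case less
  have lq: "ln (real q) > 0" using q by simp
  have lp: "ln (real p) > 0" using q by simp
  have s0: "s > 0" using lq lp by (simp add: s_def)
  have s1: "s \<le> 1" using lq lp q by (simp add: s_def)
  have c0: "c > 0" using q by (simp add: c_def)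
  have p0: "p > 0" using q by simp
  define L where "L = Max S - Min S"
  have fS: "finite S" and neS: "S \<noteq> {}" and g: "gen q \<tau>" and SL: "S \<subseteq> tau_star p \<tau> ` words q"
    using less.prems by auto
  show ?case
  proof (cases "card S = 1")
    case True
    then obtain x where "S = {x}" by (auto simp: card_Suc_eq)
    then show ?thesis by simp
  next
    case False
    obtain x where x: "x \<in> S" using neS by blast
    then have "S \<noteq> {x}" using False by auto
    then obtain y where "y \<in> S" "y \<noteq> x" using x by blast
    then have xy: "x \<in> S" "y \<in> S" "x \<noteq> y" using x by auto
    have "Min S \<le> x" "Min S \<le> y" "x \<le> Max S" "y \<le> Max S" using xy fS by auto
    then have L1: "L \<ge> 1" using xy unfolding L_def by linarith
    define \<Lambda>j where "\<Lambda>j j = tau_star p (\<lambda>J. \<tau> (j # J)) ` words q" for j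
    define gg where "gg j y = \<tau> [j] + int p * y" for j y
    define T where "T j = {y \<in> \<Lambda>j j. gg j y \<in> S}" for j
    define J where "J = {j. j < q \<and> T j \<noteq> {}}"
    have injg: "inj (gg j)" for j unfolding gg_def using p0 by (auto intro: injI)
    have finT: "finite (T j)" for j
    proof -
      have "T j \<subseteq> gg j -` S" unfolding T_def by auto
      then show ?thesis using finite_vimageI[OF fS injg] finite_subset by blast
    qed
    have gmod: "gg j y mod int q = int j" if "j < q" for j y
      unfolding gg_def by (rule class_mod[OF g that q(3)])
    have Sdec: "S = (\<Union>j\<in>J. gg j ` T j)"
    proof
      show "S \<subseteq> (\<Union>j\<in>J. gg j ` T j)"
      proof
        fix x assume x: "x \<in> S"
        then have "x \<in> tau_star p \<tau> ` words q" using SL by blast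
        from class_decomp[OF g this] obtain j y where "j < q"
          "y \<in> tau_star p (\<lambda>J. \<tau> (j # J)) ` words q" "x = \<tau> [j] + int p * y" by blast
        then have jy: "j < q" "y \<in> \<Lambda>j j" "x = gg j y" unfolding \<Lambda>j_def gg_def by auto
        then have "y \<in> T j" using x unfolding T_def by auto
        then show "x \<in> (\<Union>j\<in>J. gg j ` T j)" using jy unfolding J_def by auto
      qed
      show "(\<Union>j\<in>J. gg j ` T j) \<subseteq> S" unfolding T_def by auto
    qed
    have finJ: "finite J" unfolding J_def by auto
    have Jq: "J \<subseteq> {..<q}" unfolding J_def by auto
    define k where "k = card J"
    have kq: "k \<le> q" unfolding k_def using card_mono[OF _ Jq] by simp
    have k1: "k \<ge> 1" unfolding k_def using neS Sdec finJ by (cases "J = {}") (auto simp: card_gt_0_iff Suc_le_eq)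
    have neJ: "J \<noteq> {}" using k1 k_def by auto
    have cardS: "card S = (\<Sum>j\<in>J. card (T j))"
    proof -
      have "card S = (\<Sum>j\<in>J. card (gg j ` T j))" unfolding Sdec
      proof (rule card_UN_disjoint[OF finJ])
        show "\<forall>j\<in>J. finite (gg j ` T j)" using finT by auto
        show "\<forall>i\<in>J. \<forall>j\<in>J. i \<noteq> j \<longrightarrow> gg i ` T i \<inter> gg j ` T j = {}"
        proof (intro ballI impI)
          fix i j assume ij: "i \<in> J" "j \<in> J" "i \<noteq> j"
          then have iq: "i < q" "j < q" unfolding J_def by auto
          show "gg i ` T i \<inter> gg j ` T j = {}"
          proof (rule equals0I)
            fix z assume "z \<in> gg i ` T i \<inter> gg j ` T j"
            then obtain a b where "z = gg i a" "z = gg j b" by blast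
            then have "int i = int j" using gmod[OF iq(1), of a] gmod[OF iq(2), of b] by simp
            then show False using ij by simp
          qed
        qed
      qed
      also have "\<dots> = (\<Sum>j\<in>J. card (T j))"
        by (intro sum.cong refl card_image) (use injg in \<open>auto intro: inj_on_subset\<close>)
      finally show ?thesis .
    qed
    define mn where "mn j = gg j (Min (T j))" for j
    define mx where "mx j = gg j (Max (T j))" for j
    have neT: "T j \<noteq> {}" if "j \<in> J" for j using that unfolding J_def by auto
    have mnS: "mn j \<in> S" and mxS: "mx j \<in> S" if "j \<in> J" for j
      using Min_in[OF finT neT[OF that]] Max_in[OF finT neT[OF that]]
      unfolding mn_def mx_def T_def by auto
    have mnb: "Min S \<le> mn j" and mxb: "mx j \<le> Max S" if "j \<in> J" for j
      using mnS[OF that] mxS[OF that] fS by auto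
    have spanT: "int p * (Max (T j) - Min (T j)) = mx j - mn j" for j
      unfolding mx_def mn_def gg_def by (simp add: algebra_simps)
    have spanT0: "Max (T j) - Min (T j) \<ge> 0" if "j \<in> J" for j
      using Max_ge[OF finT Min_in[OF finT neT[OF that]]] by simp
    have IHj: "real (card (T j)) \<le> (real_of_int (Max (T j) - Min (T j)) / c + 1) powr s" if j: "j \<in> J" for j
    proof (rule less.hyps)
      have "mx j - mn j \<le> L" using mnb[OF j] mxb[OF j] unfolding L_def by linarith
      then have "int p * (Max (T j) - Min (T j)) \<le> L" using spanT by simp
      moreover have "2 * (Max (T j) - Min (T j)) \<le> int p * (Max (T j) - Min (T j))"
        by (rule mult_right_mono) (use q spanT0[OF j] in auto)
      ultimately have "2 * (Max (T j) - Min (T j)) \<le> L" by (rule order.trans[rotated])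
      then have "Max (T j) - Min (T j) < L" using L1 by (smt (verit))
      then show "nat (Max (T j) - Min (T j)) < nat (Max S - Min S)" using spanT0[OF j] L_def by simp
      show "gen q (\<lambda>J. \<tau> (j # J))" using gen_sub[OF g] j unfolding J_def by auto
      show "finite (T j)" by (rule finT)
      show "T j \<noteq> {}" by (rule neT[OF j])
      show "T j \<subseteq> tau_star p (\<lambda>J. \<tau> (j # J)) ` words q" unfolding T_def \<Lambda>j_def by auto
    qed
    have injmn: "inj_on mn J"
    proof (rule inj_onI)
      fix i j assume "i \<in> J" "j \<in> J" "mn i = mn j"
      moreover have "i < q" "j < q" using \<open>i \<in> J\<close> \<open>j \<in> J\<close> unfolding J_def by auto
      ultimately have "int i = int j" using gmod[of i] gmod[of j] unfolding mn_def by metis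
      then show "i = j" by simp
    qed
    have injmx: "inj_on (\<lambda>j. - mx j) J"
    proof (rule inj_onI)
      fix i j assume "i \<in> J" "j \<in> J" "- mx i = - mx j"
      then have e: "mx i = mx j" by simp
      have "i < q" "j < q" using \<open>i \<in> J\<close> \<open>j \<in> J\<close> unfolding J_def by auto
      then have "int i = int j" using e gmod[of i] gmod[of j] unfolding mx_def by metis
      then show "i = j" by simp
    qed
    have injmx': "inj_on mx J" using injmx by (auto simp: inj_on_def)
    define r where "r j = card {i\<in>J. mn i < mn j}" for j
    define t where "t j = card {i\<in>J. - mx i < - mx j}" for j
    have rb: "int (r j) \<le> mn j - Min S" if j: "j \<in> J" for j
    proof -
      have "r j = card (mn ` {i\<in>J. mn i < mn j})" unfolding r_def
        by (rule card_image[symmetric]) (rule inj_on_subset[OF injmn], auto)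
      also have "int \<dots> \<le> mn j - Min S"
        by (rule card_int_interval) (use mnb mnb[OF j] in auto)
      finally show ?thesis by simp
    qed
    have tb: "int (t j) \<le> Max S - mx j" if j: "j \<in> J" for j
    proof -
      have "t j = card (mx ` {i\<in>J. - mx i < - mx j})" unfolding t_def
        by (rule card_image[symmetric]) (rule inj_on_subset[OF injmx'], auto)
      also have "int \<dots> \<le> Max S + 1 - (mx j + 1)"
        by (rule card_int_interval) (use mxb mxb[OF j] in auto)
      finally show ?thesis by simp
    qed
    have sr: "real (\<Sum>j\<in>J. r j) = real k * (real k - 1) / 2"
      unfolding r_def rank_sum[OF finJ injmn] sum_lessThan_id k_def ..
    have st: "real (\<Sum>j\<in>J. t j) = real k * (real k - 1) / 2"
      unfolding t_def rank_sum[OF finJ injmx] sum_lessThan_id k_def ..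
    define x where "x j = (real_of_int L - real (r j) - real (t j)) / real p" for j
    have spx: "real_of_int (Max (T j) - Min (T j)) \<le> x j" if j: "j \<in> J" for j
    proof -
      have "real p * real_of_int (Max (T j) - Min (T j)) = real_of_int (mx j - mn j)"
      proof -
        have "real_of_int (int p * (Max (T j) - Min (T j))) = real_of_int (mx j - mn j)"
          using spanT[of j] by simp
        then show ?thesis by simp
      qed
      also have "\<dots> \<le> real_of_int L - real (r j) - real (t j)"
        using rb[OF j] tb[OF j] unfolding L_def by linarith
      finally show ?thesis unfolding x_def using p0 by (simp add: field_simps)
    qed
    have x0: "x j \<ge> 0" if "j \<in> J" for j using spx[OF that] spanT0[OF that] by linarith
    have sumx: "(\<Sum>j\<in>J. x j) = real k * (real_of_int L - (real k - 1)) / real p"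
    proof -
      have "(\<Sum>j\<in>J. x j) = (real k * real_of_int L - real (\<Sum>j\<in>J. r j) - real (\<Sum>j\<in>J. t j)) / real p"
        unfolding x_def by (simp add: sum_divide_distrib[symmetric] sum_subtractf k_def)
      also have "\<dots> = real k * (real_of_int L - (real k - 1)) / real p"
        unfolding sr st using p0 by (simp add: field_simps)
      finally show ?thesis .
    qed
    have "real (card S) = (\<Sum>j\<in>J. real (card (T j)))" using cardS by simp
    also have "\<dots> \<le> (\<Sum>j\<in>J. (x j / c + 1) powr s)"
    proof (rule sum_mono)
      fix j assume j: "j \<in> J"
      have "real (card (T j)) \<le> (real_of_int (Max (T j) - Min (T j)) / c + 1) powr s" by (rule IHj[OF j])
      also have "\<dots> \<le> (x j / c + 1) powr s"
        by (rule powr_mono2) (use s0 spx[OF j] spanT0[OF j] c0 in \<open>auto simp: divide_right_mono\<close>)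
      finally show "real (card (T j)) \<le> (x j / c + 1) powr s" .
    qed
    also have "\<dots> \<le> card J * ((\<Sum>j\<in>J. x j / c + 1) / card J) powr s"
      by (rule jensen_pow[OF finJ neJ _ s0[THEN less_imp_le] s1]) (use x0 c0 in \<open>auto intro: add_nonneg_pos divide_nonneg_pos\<close>)
    also have "(\<Sum>j\<in>J. x j / c + 1) / card J = (real_of_int L - (real k - 1)) / real p / c + 1"
      using sumx k1 c0 p0 unfolding k_def
      by (simp add: sum.distrib sum_divide_distrib[symmetric] field_simps) (metis distrib_left)
    also have "real (card J) * ((real_of_int L - (real k - 1)) / real p / c + 1) powr s
        \<le> (real_of_int L / c + 1) powr s"
    proof -
      have "0 \<le> (\<Sum>j\<in>J. x j)" using x0 by (intro sum_nonneg) auto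
      also note sumx
      finally have "real_of_int L \<ge> real k - 1" using k1 p0
        by (simp add: zero_le_divide_iff zero_le_mult_iff)
      then show ?thesis unfolding k_def s_def c_def
        using key_ineq[OF q(1,2), of k "real_of_int L"] k1 kq k_def by simp
    qed
    finally show ?thesis unfolding L_def .
  qed
qed

lemma regular_gen: "regular_mapping p q \<tau> \<Longrightarrow> gen q \<tau>"
  unfolding regular_mapping_def gen_def by blast

lemma upper_bound:
  fixes p q :: nat
  assumes q: "2 \<le> q" "q < p" "q dvd p"
  defines "s \<equiv> ln (real q) / ln (real p)"
  assumes g: "gen q \<tau>" and Lam: "\<Lambda> \<subseteq> tau_star p \<tau> ` words q"
  shows "upper_beurling_density s (real_of_int ` \<Lambda>) \<le> ereal ((2 * (real p - 1) / (real q - 1)) powr s)"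
proof -
  define c where "c = (real q - 1) / (real p - 1)"
  define C where "C = 2 * (real p - 1) / (real q - 1)"
  have c0: "c > 0" using q by (simp add: c_def)
  have C0: "C > 0" using q by (simp add: C_def)
  have Cc: "2 / c = C" using q by (simp add: c_def C_def)
  have lq: "ln (real q) > 0" using q by simp
  have lp: "ln (real p) > 0" using q by simp
  have s0: "s > 0" using lq lp by (simp add: s_def)
  have bound: "real (card (real_of_int ` \<Lambda> \<inter> {x - h<..<x + h})) / h powr s \<le> (C + 1 / h) powr s"
    if h: "h > 0" for h x
  proof -
    define S where "S = {z \<in> \<Lambda>. x - h < real_of_int z \<and> real_of_int z < x + h}"
    have eq: "real_of_int ` \<Lambda> \<inter> {x - h<..<x + h} = real_of_int ` S" unfolding S_def by auto
    have cardeq: "card (real_of_int ` S) = card S" by (rule card_image) (auto intro: inj_onI)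
    have finS: "finite S"
    proof (rule finite_subset)
      show "S \<subseteq> {\<lfloor>x - h\<rfloor>..\<lceil>x + h\<rceil>}" unfolding S_def
        by (auto simp: floor_le_iff le_ceiling_iff)
    qed simp
    have rhs0: "(C + 1 / h) powr s \<ge> 0" by simp
    show ?thesis
    proof (cases "S = {}")
      case True then show ?thesis using eq rhs0 by simp
    next
      case False
      have "real (card S) \<le> (real_of_int (Max S - Min S) / c + 1) powr s"
        using main_count[OF q g finS False] Lam unfolding S_def s_def c_def by auto
      also have "\<dots> \<le> (2 * h / c + 1) powr s"
      proof (rule powr_mono2)
        have "Max S \<in> S" "Min S \<in> S" using finS False by auto
        then have "real_of_int (Max S - Min S) < 2 * h" unfolding S_def by auto
        moreover have "Min S \<le> Max S" using finS False by (simp add: Min_le_iff Max_ge_iff)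
        ultimately show "real_of_int (Max S - Min S) / c + 1 \<le> 2 * h / c + 1"
          "0 \<le> real_of_int (Max S - Min S) / c + 1" using c0 by (auto simp: divide_right_mono)
      qed (use s0 in auto)
      finally have cS: "real (card S) \<le> (2 * h / c + 1) powr s" .
      have "real (card S) / h powr s \<le> (2 * h / c + 1) powr s / h powr s"
        by (rule divide_right_mono[OF cS]) simp
      also have "\<dots> = ((2 * h / c + 1) / h) powr s" by (simp add: powr_divide)
      also have "(2 * h / c + 1) / h = C + 1 / h" using h c0 Cc by (simp add: field_simps)
      finally show ?thesis using eq cardeq by simp
    qed
  qed
  have ev: "eventually (\<lambda>h. (SUP x. ereal (real (card (real_of_int ` \<Lambda> \<inter> {x - h<..<x + h})) / h powr s))
       \<le> ereal ((C + 1 / h) powr s)) at_top"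
    using eventually_gt_at_top[of "0::real"]
    by eventually_elim (auto intro!: SUP_least simp: bound)
  have lim: "((\<lambda>h. ereal ((C + 1 / h) powr s)) \<longlongrightarrow> ereal (C powr s)) at_top"
  proof -
    have "((\<lambda>h::real. C + 1 / h) \<longlongrightarrow> C + 0) at_top"
      by (intro tendsto_add tendsto_const tendsto_divide_0[OF tendsto_const]
          filterlim_at_top_imp_at_infinity[OF filterlim_ident])
    then have "((\<lambda>h::real. (C + 1 / h) powr s) \<longlongrightarrow> C powr s) at_top"
      using C0 by (intro tendsto_powr tendsto_const) auto
    then show ?thesis by (rule tendsto_ereal)
  qed
  have "upper_beurling_density s (real_of_int ` \<Lambda>) \<le> Limsup at_top (\<lambda>h. ereal ((C + 1 / h) powr s))"
    unfolding upper_beurling_density_def by (rule Limsup_mono[OF ev])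
  also have "\<dots> = ereal (C powr s)" by (rule lim_imp_Limsup[OF _ lim]) simp
  finally show ?thesis unfolding C_def .
qed

definition tau0 :: "nat list \<Rightarrow> int" where "tau0 I = int (last I)"

lemma tau0_regular:
  assumes "2 \<le> q" "q < p"
  shows "regular_mapping p q tau0"
  unfolding regular_mapping_def tau0_def
proof (intro conjI ballI allI impI)
  fix I assume I: "I \<in> words q"
  then have "last I < q" unfolding words_def by (auto intro: last_in_set)
  then show "int (last I) \<in> {- 1..int p - 2}" using assms by auto
  show "int (last I) mod int q = int (last I) mod int q" ..
  show "\<exists>L. \<forall>l\<ge>L. int (last (I @ replicate l 0)) = 0"
    by (rule exI[of _ 1]) auto
next
  fix n :: nat assume "1 \<le> n"
  then show "int (last (replicate n 0)) = 0" by (cases n) auto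
qed

lemma canonical_sub:
  assumes q: "2 \<le> q" "q < p"
  shows "canonical_set p q \<subseteq> Lambda_tau p q tau0"
proof
  fix z assume "z \<in> canonical_set p q"
  then obtain a k where ak: "z = (\<Sum>i<k. int (a i) * int p ^ i)" "k \<ge> 1" "\<forall>i<k. a i < q"
    unfolding canonical_set_def by blast
  define I where "I = map a [0..<k]"
  have I: "I \<in> words q" using ak unfolding I_def words_def by auto
  have g: "gen q tau0" using regular_gen[OF tau0_regular[OF q]] .
  obtain K0 where K0: "\<forall>K\<ge>K0. tau_star p tau0 I = (\<Sum>i<K. tau0 (pref I (Suc i)) * int p ^ i)"
    using tau_star_sum[OF g I] by blast
  define K where "K = K0 + k"
  have "tau_star p tau0 I = (\<Sum>i<K. tau0 (pref I (Suc i)) * int p ^ i)" using K0 K_def by simp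
  also have "\<dots> = (\<Sum>i<k. tau0 (pref I (Suc i)) * int p ^ i)"
  proof (rule sum.mono_neutral_right)
    show "\<forall>i\<in>{..<K} - {..<k}. tau0 (pref I (Suc i)) * int p ^ i = 0"
      unfolding tau0_def pref_alt I_def by auto
  qed (auto simp: K_def)
  also have "\<dots> = (\<Sum>i<k. int (a i) * int p ^ i)"
  proof (rule sum.cong[OF refl])
    fix i assume "i \<in> {..<k}"
    then have "last (pref I (Suc i)) = a i" unfolding pref_alt I_def
      by (simp add: last_conv_nth take_map)
    then show "tau0 (pref I (Suc i)) * int p ^ i = int (a i) * int p ^ i" unfolding tau0_def by simp
  qed
  finally have "z = tau_star p tau0 I" using ak by simp
  then show "z \<in> Lambda_tau p q tau0" unfolding Lambda_tau_def using I by blast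
qed

fun Eset :: "nat \<Rightarrow> nat \<Rightarrow> nat \<Rightarrow> int set" where
  "Eset p q 0 = {0}"
| "Eset p q (Suc n) = (\<lambda>(d,y). int d + int p * y) ` ({..<q} \<times> Eset p q n)"

lemma Eset_card:
  assumes "q < p"
  shows "finite (Eset p q n) \<and> card (Eset p q n) = q ^ n"
proof (induction n)
  case (Suc n)
  have inj: "inj_on (\<lambda>(d,y). int d + int p * y) ({..<q} \<times> Eset p q n)"
  proof (rule inj_onI)
    fix u v assume uv: "u \<in> {..<q} \<times> Eset p q n" "v \<in> {..<q} \<times> Eset p q n"
      "(\<lambda>(d,y). int d + int p * y) u = (\<lambda>(d,y). int d + int p * y) v"
    obtain d y where u: "u = (d, y)" by (cases u)
    obtain d' y' where v: "v = (d', y')" by (cases v)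
    have d: "d < q" "d' < q" using uv u v by auto
    have e: "int d + int p * y = int d' + int p * y'" using uv(3) u v by simp
    have "(int d + int p * y) mod int p = int d" using d assms by simp
    moreover have "(int d' + int p * y') mod int p = int d'" using d assms by simp
    ultimately have dd: "d = d'" using e by simp
    then have "y = y'" using e assms by simp
    then show "u = v" using dd u v by simp
  qed
  show ?case using Suc card_image[OF inj] by (simp add: card_cartesian_product)
qed simp

lemma Eset_bound:
  assumes q: "2 \<le> q" "q < p"
  shows "z \<in> Eset p q n \<Longrightarrow> 0 \<le> z \<and> real_of_int z \<le> (real q - 1) / (real p - 1) * (real p ^ n - 1)"
proof (induction n arbitrary: z)
  case (Suc n)
  then obtain d y where dy: "d < q" "y \<in> Eset p q n" "z = int d + int p * y" by auto
  have y: "0 \<le> y" "real_of_int y \<le> (real q - 1) / (real p - 1) * (real p ^ n - 1)" using Suc.IH[OF dy(2)] by auto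
  have "real_of_int z = real d + real p * real_of_int y" using dy by simp
  also have "\<dots> \<le> (real q - 1) + real p * ((real q - 1) / (real p - 1) * (real p ^ n - 1))"
    using dy(1) y q by (intro add_mono mult_left_mono) auto
  also have "\<dots> = (real q - 1) / (real p - 1) * (real p ^ Suc n - 1)"
    using q by (simp add: field_simps)
  finally show ?case using dy y by simp
qed simp

lemma Eset_digits:
  "z \<in> Eset p q n \<Longrightarrow> \<exists>a. (\<forall>i<n. a i < q) \<and> z = (\<Sum>i<n. int (a i) * int p ^ i)"
proof (induction n arbitrary: z)
  case (Suc n)
  then obtain d y where dy: "d < q" "y \<in> Eset p q n" "z = int d + int p * y" by auto
  obtain a where a: "\<forall>i<n. a i < q" "y = (\<Sum>i<n. int (a i) * int p ^ i)" using Suc.IH[OF dy(2)] by blast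
  define b where "b i = (case i of 0 \<Rightarrow> d | Suc j \<Rightarrow> a j)" for i
  have "(\<forall>i<Suc n. b i < q)" using a dy unfolding b_def by (auto split: nat.split)
  moreover have "z = (\<Sum>i<Suc n. int (b i) * int p ^ i)"
    unfolding sum.lessThan_Suc_shift using dy a
    by (simp add: b_def sum_distrib_left mult_ac)
  ultimately show ?case by blast
qed simp

lemma Eset_canonical: "n \<ge> 1 \<Longrightarrow> Eset p q n \<subseteq> canonical_set p q"
  using Eset_digits unfolding canonical_set_def by blast

lemma lower_bound:
  fixes p q :: nat
  assumes q: "2 \<le> q" "q < p"
  defines "s \<equiv> ln (real q) / ln (real p)"
  shows "ereal ((2 * (real p - 1) / (real q - 1)) powr s) \<le> upper_beurling_density s (real_of_int ` canonical_set p q)"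
proof -
  define c where "c = (real q - 1) / (real p - 1)"
  define C where "C = 2 * (real p - 1) / (real q - 1)"
  have c0: "c > 0" using q by (simp add: c_def)
  have c1: "c \<le> 1" using q by (simp add: c_def)
  have Cc: "2 / c = C" using q by (simp add: c_def C_def)
  have lq: "ln (real q) > 0" using q by simp
  have lp: "ln (real p) > 0" using q by simp
  have s0: "s > 0" using lq lp by (simp add: s_def)
  have ps: "real p powr s = real q" using lq lp q by (simp add: s_def powr_def)
  define hn where "hn n = (c * (real p ^ n - 1) + 1) / 2" for n :: nat
  define a where "a n = real q ^ n / hn n powr s" for n :: nat
  define F where "F h = (SUP x. ereal (real (card (real_of_int ` canonical_set p q \<inter> {x - h<..<x + h})) / h powr s))" for h
  have p1: "real p \<ge> 1" using q by simp
  have hn_ge: "hn n \<ge> c * real p ^ n / 2" for n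
    using c1 unfolding hn_def by (simp add: field_simps)
  have hn0: "hn n > 0" for n
  proof -
    have "c * real p ^ n / 2 > 0" using c0 q by simp
    then show ?thesis using hn_ge[of n] by linarith
  qed
  have Fa: "ereal (a n) \<le> F (hn n)" if n: "n \<ge> 1" for n
  proof -
    define x where "x = c * (real p ^ n - 1) / 2"
    define W where "W = real_of_int ` canonical_set p q \<inter> {x - hn n<..<x + hn n}"
    have finW: "finite W"
    proof (rule finite_subset)
      show "W \<subseteq> real_of_int ` {\<lfloor>x - hn n\<rfloor>..\<lceil>x + hn n\<rceil>}" unfolding W_def
        by (auto simp: floor_le_iff le_ceiling_iff intro!: imageI)
    qed simp
    have sub: "real_of_int ` Eset p q n \<subseteq> W"
    proof
      fix w assume "w \<in> real_of_int ` Eset p q n"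
      then obtain z where z: "z \<in> Eset p q n" "w = real_of_int z" by blast
      have "0 \<le> z" "real_of_int z \<le> c * (real p ^ n - 1)"
        using Eset_bound[OF q z(1)] unfolding c_def by auto
      moreover have "z \<in> canonical_set p q" using Eset_canonical[OF n] z by blast
      moreover have "x - hn n < w" "w < x + hn n"
      proof -
        have z0: "real_of_int z \<ge> 0" using \<open>0 \<le> z\<close> by simp
        have e1: "c * (real p ^ n - 1) / 2 - (c * (real p ^ n - 1) + 1) / 2 = - 1/2" by (simp add: field_simps)
        have e2: "c * (real p ^ n - 1) / 2 + (c * (real p ^ n - 1) + 1) / 2 = c * (real p ^ n - 1) + 1/2"
          by (simp add: field_simps)
        show "x - hn n < w" unfolding x_def hn_def using z0 z(2) e1 by linarith
        show "w < x + hn n" unfolding x_def hn_def using \<open>real_of_int z \<le> c * (real p ^ n - 1)\<close> z(2) e2 by linarith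
      qed
      ultimately show "w \<in> W" unfolding W_def using z by auto
    qed
    have "real q ^ n = real (card (real_of_int ` Eset p q n))"
      using Eset_card[OF q(2), of n] by (simp add: card_image inj_on_def)
    also have "\<dots> \<le> real (card W)" using card_mono[OF finW sub] by simp
    finally have "a n \<le> real (card W) / hn n powr s" unfolding a_def
      using hn0[of n] by (simp add: divide_right_mono)
    then have "ereal (a n) \<le> ereal (real (card W) / hn n powr s)" by simp
    also have "\<dots> \<le> F (hn n)" unfolding F_def W_def by (rule SUP_upper) simp
    finally show ?thesis .
  qed
  have alim: "a \<longlonglongrightarrow> C powr s"
  proof -
    have eq: "a n = (2 / (c + (1 - c) * (1 / real p) ^ n)) powr s" for n
    proof -
      have pq: "(real p ^ n) powr s = real q ^ n"
      proof -
        have "(real p ^ n) powr s = (real p powr real n) powr s" using q by (simp add: powr_realpow)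
        also have "\<dots> = (real p powr s) powr real n" by (rule powr_powr_swap)
        also have "\<dots> = real q ^ n" using ps q by (simp add: powr_realpow)
        finally show ?thesis .
      qed
      have "a n = (real p ^ n) powr s / hn n powr s" unfolding a_def pq ..
      also have "\<dots> = (real p ^ n / hn n) powr s" by (simp add: powr_divide)
      also have "real p ^ n / hn n = 2 / (c + (1 - c) * (1 / real p) ^ n)"
        using q unfolding hn_def by (simp add: field_simps power_divide)
      finally show ?thesis .
    qed
    have "(\<lambda>n. c + (1 - c) * (1 / real p) ^ n) \<longlonglongrightarrow> c + (1 - c) * 0"
      using q by (intro tendsto_intros LIMSEQ_realpow_zero) auto
    then have "(\<lambda>n. 2 / (c + (1 - c) * (1 / real p) ^ n)) \<longlonglongrightarrow> 2 / c"
      using c0 by (intro tendsto_intros) auto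
    then have "(\<lambda>n. (2 / (c + (1 - c) * (1 / real p) ^ n)) powr s) \<longlonglongrightarrow> (2 / c) powr s"
      using c0 by (intro tendsto_powr tendsto_const) auto
    then show ?thesis unfolding eq Cc .
  qed
  have "ereal (C powr s) \<le> Limsup at_top F"
  proof (rule Limsup_greatest)
    fix P :: "real \<Rightarrow> bool" assume evP: "eventually P at_top"
    have "\<exists>H. \<forall>h\<ge>H. P h" using evP by (simp add: eventually_at_top_linorder)
    then obtain H where H: "\<And>h. h \<ge> H \<Longrightarrow> P h" by blast
    obtain N :: nat where N: "real N \<ge> 2 * H / c" using real_arch_simple by blast
    have "eventually (\<lambda>n. ereal (a n) \<le> (SUP h\<in>Collect P. F h)) sequentially"
      unfolding eventually_sequentially
    proof (intro exI[of _ "N + 1"] allI impI)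
      fix n assume n: "n \<ge> N + 1"
      have "real n \<le> real p ^ n"
      proof -
        have "n < 2 ^ n" by (rule less_exp)
        also have "(2::nat) ^ n \<le> p ^ n" using q by (intro power_mono) auto
        finally have "n \<le> p ^ n" by simp
        then have "real n \<le> real (p ^ n)" by (simp only: of_nat_le_iff)
        then show ?thesis by simp
      qed
      then have "c * real n / 2 \<le> c * real p ^ n / 2" using c0 by simp
      moreover have "H \<le> c * real n / 2"
      proof -
        have "2 * H / c \<le> real n" using N n by simp
        then show ?thesis using c0 by (simp add: field_simps)
      qed
      ultimately have "H \<le> hn n" using hn_ge[of n] by (meson order.trans)
      then have "hn n \<in> Collect P" using H by simp
      then have "F (hn n) \<le> (SUP h\<in>Collect P. F h)" by (rule SUP_upper)
      then show "ereal (a n) \<le> (SUP h\<in>Collect P. F h)" using Fa[of n] n by simp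
    qed
    then show "ereal (C powr s) \<le> (SUP h\<in>Collect P. F h)"
      by (intro tendsto_le[OF trivial_limit_sequentially tendsto_const tendsto_ereal[OF alim]])
  qed
  then show ?thesis unfolding upper_beurling_density_def F_def C_def .
qed

theorem theorem1p5:
  fixes p q :: nat
  assumes "2 \<le> q" and "q < p" and "q dvd p"
  defines "s \<equiv> ln (real q) / ln (real p)"
  shows "(\<forall>\<tau>. regular_mapping p q \<tau> \<longrightarrow>
           upper_beurling_density s (real_of_int ` Lambda_tau p q \<tau>)
             \<le> ereal ((2 * (real p - 1) / (real q - 1)) powr s))
       \<and> upper_beurling_density s (real_of_int ` canonical_set p q)
             = ereal ((2 * (real p - 1) / (real q - 1)) powr s)"
proof -
  have A: "\<forall>\<tau>. regular_mapping p q \<tau> \<longrightarrow>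
           upper_beurling_density s (real_of_int ` Lambda_tau p q \<tau>)
             \<le> ereal ((2 * (real p - 1) / (real q - 1)) powr s)"
  proof (intro allI impI)
    fix \<tau> assume "regular_mapping p q \<tau>"
    then show "upper_beurling_density s (real_of_int ` Lambda_tau p q \<tau>)
             \<le> ereal ((2 * (real p - 1) / (real q - 1)) powr s)"
      unfolding Lambda_tau_def s_def
      using upper_bound[OF assms(1-3) regular_gen] by simp
  qed
  have B: "upper_beurling_density s (real_of_int ` canonical_set p q)
             \<le> ereal ((2 * (real p - 1) / (real q - 1)) powr s)"
    unfolding s_def
    using upper_bound[OF assms(1-3) regular_gen[OF tau0_regular[OF assms(1,2)]]
        canonical_sub[OF assms(1,2), unfolded Lambda_tau_def]] by simp
  have C: "ereal ((2 * (real p - 1) / (real q - 1)) powr s)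
       \<le> upper_beurling_density s (real_of_int ` canonical_set p q)"
    unfolding s_def by (rule lower_bound[OF assms(1,2)])
  show ?thesis using A B C by (simp add: antisym)
qed

end
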